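(* Let $f$ be a function on $\mathcal{X}\times\mathcal{Y}$, let $\mu_0,\mu_1$ be distributions on $\mathcal{X}\times\mathcal{Y}$, $\mu=\frac12\mu_0+\frac12\mu_1$, and let $\nu=\lambda\mu_0+(1-\lambda)\mu_1$ for some $\lambda\in[0,1]$. Then for every $\varepsilon\ge0$, $\mathrm{IC}^{\mathrm{internal}}_{\nu}[f,2\varepsilon]\le 2\,\mathrm{IC}^{\mathrm{internal}}_{\mu}[f,\varepsilon]+6$.
   Context: For a two-party randomized protocol $\Pi$ and $(X,Y)\sim\mu$, the internal information is $I(\Pi;X\mid Y)+I(\Pi;Y\mid X)$ (base-2 logs). $\mathrm{IC}^{\mathrm{internal}}_\mu[f,\varepsilon]$ is the infimum of the internal information over protocols $\Pi$ with $\Pr_{(x,y)\sim\mu}[\mathrm{output}(\Pi(x,y))\ne f(x,y)]\le\varepsilon$. *)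

theory Defs
  imports "HOL-Probability.Probability"
begin

text \<open>A protocol runs for a fixed number of rounds
  (shorter protocols are padded).  There is a public random seed r (drawn from pub),
  and private seeds ra (Alice, from privA) and rb (Bob, from privB), all independent
  of each other and of the inputs.  In each round, the speaker is determined by the
  public seed and the history so far; the speaker sends one bit which depends on
  her/his own input, own private seed, the public seed and the history.\<close>

record ('x, 'y, 'o) protocol =
  rounds :: nat
  pub :: "nat pmf"
  privA :: "nat pmf"
  privB :: "nat pmf"
  alice_speaks :: "nat \<Rightarrow> bool list \<Rightarrow> bool"
  msgA :: "'x \<Rightarrow> nat \<Rightarrow> nat \<Rightarrow> bool list \<Rightarrow> bool"
  msgB :: "'y \<Rightarrow> nat \<Rightarrow> nat \<Rightarrow> bool list \<Rightarrow> bool"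
  outp :: "nat \<Rightarrow> bool list \<Rightarrow> 'o"

fun msgs :: "('x, 'y, 'o) protocol \<Rightarrow> 'x \<Rightarrow> 'y \<Rightarrow> nat \<Rightarrow> nat \<Rightarrow> nat \<Rightarrow> nat \<Rightarrow> bool list" where
  "msgs P x y r ra rb 0 = []"
| "msgs P x y r ra rb (Suc k) =
     (let h = msgs P x y r ra rb k
      in h @ [if alice_speaks P r h then msgA P x r ra h else msgB P y r rb h])"

definition run :: "('x, 'y, 'o) protocol \<Rightarrow> ('x \<times> 'y) pmf \<Rightarrow> ('x \<times> 'y \<times> (nat \<times> bool list)) pmf" where
  "run P mu =
     bind_pmf mu (\<lambda>(x, y).
     bind_pmf (pub P) (\<lambda>r.
     bind_pmf (privA P) (\<lambda>ra.
     bind_pmf (privB P) (\<lambda>rb.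
       return_pmf (x, y, (r, msgs P x y r ra rb (rounds P)))))))"

definition cmi :: "'a pmf \<Rightarrow> ('a \<Rightarrow> 'b) \<Rightarrow> ('a \<Rightarrow> 'c) \<Rightarrow> ('a \<Rightarrow> 'd) \<Rightarrow> real" where
  "cmi D A B C = prob_space.conditional_mutual_information (measure_pmf D) 2
      (count_space UNIV) (count_space UNIV) (count_space UNIV) A B C"

definition internal_info :: "('x, 'y, 'o) protocol \<Rightarrow> ('x \<times> 'y) pmf \<Rightarrow> real" where
  "internal_info P mu =
     cmi (run P mu) (\<lambda>(x, y, t). t) (\<lambda>(x, y, t). x) (\<lambda>(x, y, t). y)
   + cmi (run P mu) (\<lambda>(x, y, t). t) (\<lambda>(x, y, t). y) (\<lambda>(x, y, t). x)"

definition err :: "('x, 'y, 'o) protocol \<Rightarrow> ('x \<times> 'y) pmf \<Rightarrow> ('x \<Rightarrow> 'y \<Rightarrow> 'o) \<Rightarrow> real" where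
  "err P mu f = measure_pmf.prob (run P mu)
     {(x, y, t). outp P (fst t) (snd t) \<noteq> f x y}"

text \<open>IC^internal_mu[f, eps]: infimum (in the extended reals, so that the infimum of
  the empty set is +infinity) of the internal information over all protocols with
  error at most eps.\<close>
definition IC_internal :: "('x \<times> 'y) pmf \<Rightarrow> ('x \<Rightarrow> 'y \<Rightarrow> 'o) \<Rightarrow> real \<Rightarrow> ereal" where
  "IC_internal mu f eps =
     Inf {ereal (internal_info P mu) | P :: ('x, 'y, 'o) protocol. err P mu f \<le> eps}"

definition mix_pmf :: "real \<Rightarrow> 'a pmf \<Rightarrow> 'a pmf \<Rightarrow> 'a pmf" where
  "mix_pmf a p q = bind_pmf (bernoulli_pmf a) (\<lambda>b. if b then p else q)"

end

theory Submission
  imports Defs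
begin

no_notation Infinite_Sum.abs_summable_on (infixr \<open>abs'_summable'_on\<close> 46)


lemma xlog_bound:
  fixes a b C :: real
  assumes "0 \<le> a" "0 \<le> b" "a \<le> C*b" "1 \<le> C"
  shows "\<bar>a * log 2 (a/b)\<bar> \<le> a * log 2 C + b / ln 2"
proof (cases "a = 0")
  case True then show ?thesis using assms by simp
next
  case False
  then have a: "a > 0" using assms by simp
  have b: "b > 0"
  proof (rule ccontr)
    assume "\<not> b > 0"
    then have "b = 0" using assms by simp
    then show False using assms a by simp
  qed
  have lc: "0 \<le> log 2 C" using assms by simp
  show ?thesis
  proof (cases "a/b \<ge> 1")
    case True
    then have "0 \<le> log 2 (a/b)" by simp
    moreover have "log 2 (a/b) \<le> log 2 C" using assms a b
      by (simp add: pos_divide_le_eq mult.commute)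
    ultimately show ?thesis using a b
      by (simp add: abs_mult mult_left_mono add_increasing2)
  next
    case False
    then have "log 2 (a/b) < 0" using a b by simp
    then have "\<bar>a * log 2 (a/b)\<bar> = a * log 2 (b/a)" using a b
      by (simp add: abs_mult log_divide)
    also have "\<dots> = a * (ln (b/a) / ln 2)" by (simp add: log_def)
    also have "\<dots> \<le> a * ((b/a) / ln 2)"
      using a b by (intro mult_left_mono divide_right_mono) (auto intro: less_imp_le)
    also have "\<dots> = b / ln 2" using a by simp
    moreover have "0 \<le> a * log 2 C" using lc a by simp
    ultimately show ?thesis by linarith
  qed
qed

lemma gibbs_pt:
  fixes a b :: real
  assumes "0 \<le> a" "0 \<le> b" "a > 0 \<Longrightarrow> b > 0"
  shows "a * log 2 (b/a) \<le> (b - a) / ln 2"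
proof (cases "a = 0")
  case True then show ?thesis using assms by simp
next
  case False
  then have a: "a > 0" and b: "b > 0" using assms by auto
  have "a * log 2 (b/a) = a * ln (b/a) / ln 2" by (simp add: log_def)
  also have "\<dots> \<le> a * (b/a - 1) / ln 2"
    using a b by (intro divide_right_mono mult_left_mono ln_le_minus_one) auto
  also have "\<dots> = (b - a) / ln 2" using a by (simp add: field_simps)
  finally show ?thesis .
qed



lemma distributed_pmf:
  fixes D :: "'a pmf" and X :: "'a \<Rightarrow> 'b"
  shows "distributed (measure_pmf D) (count_space UNIV) X (\<lambda>x. ennreal (pmf (map_pmf X D) x))"
proof -
  have "distr (measure_pmf D) (count_space UNIV) X = measure_pmf (map_pmf X D)"
    by (simp add: map_pmf_rep_eq)
  then show ?thesis unfolding distributed_def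
    by (simp only: measure_pmf_eq_density[of "map_pmf X D"]) simp
qed

lemma pmf_map_pair_le1:
  "pmf (map_pmf (\<lambda>a. (A a, B a)) D) (t, z) \<le> pmf (map_pmf A D) t"
proof -
  have "pmf (map_pmf (\<lambda>a. (A a, B a)) D) (t, z) = measure D ((\<lambda>a. (A a, B a)) -` {(t,z)})"
    by (simp add: pmf_map)
  also have "\<dots> \<le> measure D (A -` {t})"
    by (rule measure_pmf.finite_measure_mono) auto
  also have "\<dots> = pmf (map_pmf A D) t" by (simp add: pmf_map)
  finally show ?thesis .
qed

lemma pmf_map_pair_le2:
  "pmf (map_pmf (\<lambda>a. (A a, B a)) D) (t, z) \<le> pmf (map_pmf B D) z"
proof -
  have "pmf (map_pmf (\<lambda>a. (A a, B a)) D) (t, z) = measure D ((\<lambda>a. (A a, B a)) -` {(t,z)})"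
    by (simp add: pmf_map)
  also have "\<dots> \<le> measure D (B -` {z})"
    by (rule measure_pmf.finite_measure_mono) auto
  also have "\<dots> = pmf (map_pmf B D) z" by (simp add: pmf_map)
  finally show ?thesis .
qed

lemma mi_formula:
  fixes D :: "'a pmf" and A :: "'a \<Rightarrow> 't::countable" and B :: "'a \<Rightarrow> 'z::finite"
  defines "Pab \<equiv> pmf (map_pmf (\<lambda>a. (A a, B a)) D)"
    and "Pa \<equiv> pmf (map_pmf A D)" and "Pb \<equiv> pmf (map_pmf B D)"
  defines "f \<equiv> \<lambda>t. \<Sum>z\<in>UNIV. Pab (t,z) * log 2 (Pab (t,z) / (Pa t * Pb z))"
  shows "prob_space.mutual_information (measure_pmf D) 2 (count_space UNIV) (count_space UNIV) A B
          = infsetsum f UNIV \<and> f abs_summable_on UNIV"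
proof -
  interpret information_space "measure_pmf D" 2 by standard simp
  define g where "g = (\<lambda>x. Pab x * log 2 (Pab x / (Pa (fst x) * Pb (snd x))))"
  have MI: "prob_space.mutual_information (measure_pmf D) 2 (count_space UNIV) (count_space UNIV) A B
       = integral\<^sup>L (count_space UNIV \<Otimes>\<^sub>M count_space UNIV) g"
    unfolding g_def Pab_def Pa_def Pb_def
    by (rule mutual_information_distr[where S="count_space UNIV" and T="count_space UNIV"
          and Px="pmf (map_pmf A D)" and Py="pmf (map_pmf B D)" and Pxy="pmf (map_pmf (\<lambda>a. (A a, B a)) D)"])
       (auto simp: sigma_finite_measure_count_space distributed_pmf
          pair_measure_countable)
  have pm: "(count_space UNIV \<Otimes>\<^sub>M count_space UNIV :: ('t \<times> 'z) measure) = count_space UNIV"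
    by (simp add: pair_measure_countable)
  define C where "C = (\<lambda>z. if Pb z = 0 then 1 else 1 / Pb z)"
  have C1: "1 \<le> C z" for z
    using pmf_le_1[of "map_pmf B D" z] pmf_nonneg[of "map_pmf B D" z]
    unfolding C_def Pb_def by (auto simp: field_simps)
  define M where "M = (\<Sum>z\<in>UNIV. log 2 (C z))"
  have logC: "0 \<le> log 2 (C z)" "log 2 (C z) \<le> M" for z
  proof -
    show "0 \<le> log 2 (C z)" using C1[of z] by simp
    have "log 2 (C z) = (\<Sum>z\<in>{z}. log 2 (C z))" by simp
    also have "\<dots> \<le> M" unfolding M_def
    proof (rule sum_mono2)
      fix b show "0 \<le> log 2 (C b)" using C1[of b] by simp
    qed auto
    finally show "log 2 (C z) \<le> M" .
  qed
  have gbound: "norm (g x) \<le> M * Pab x + pmf (pair_pmf (map_pmf A D) (map_pmf B D)) x / ln 2" for x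
  proof -
    obtain t z where x: "x = (t,z)" by (cases x)
    have le: "Pab (t,z) \<le> C z * (Pa t * Pb z)"
    proof (cases "Pb z = 0")
      case True
      then show ?thesis using pmf_map_pair_le2[of A B D t z] pmf_nonneg[of "map_pmf (\<lambda>a. (A a, B a)) D" "(t,z)"]
        unfolding Pab_def Pb_def by simp
    next
      case False
      then show ?thesis using pmf_map_pair_le1[of A B D t z]
        unfolding Pab_def Pa_def Pb_def C_def by simp
    qed
    have "norm (g x) \<le> Pab (t,z) * log 2 (C z) + (Pa t * Pb z) / ln 2"
    proof -
      have n: "0 \<le> Pab (t,z)" "0 \<le> Pa t * Pb z" by (simp_all add: Pab_def Pa_def Pb_def)
      show ?thesis using xlog_bound[OF n le C1[of z]] by (simp add: g_def x)
    qed
    also have "\<dots> \<le> M * Pab x + pmf (pair_pmf (map_pmf A D) (map_pmf B D)) x / ln 2"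
      using logC[of z] pmf_nonneg[of "map_pmf (\<lambda>a. (A a, B a)) D" "(t,z)"]
      by (simp add: x pmf_pair Pa_def Pb_def Pab_def mult.commute[of _ "log 2 (C z)"] mult_right_mono)
    finally show ?thesis .
  qed
  have gsum: "g abs_summable_on UNIV"
  proof (rule abs_summable_on_comparison_test')
    show "(\<lambda>x. M * Pab x + pmf (pair_pmf (map_pmf A D) (map_pmf B D)) x / ln 2) abs_summable_on UNIV"
      unfolding Pab_def divide_inverse
      by (intro abs_summable_on_add abs_summable_on_cmult_right abs_summable_on_cmult_left) auto
  qed (rule gbound)
  have "infsetsum g UNIV = infsetsum g (UNIV \<times> UNIV)" by simp
  also have "\<dots> = infsetsum (\<lambda>t. infsetsum (\<lambda>z. g (t,z)) UNIV) UNIV"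
    by (rule infsetsum_Times) (use gsum in auto)
  also have "\<dots> = infsetsum f UNIV" by (simp add: f_def g_def)
  finally have eq: "infsetsum g UNIV = infsetsum f UNIV" .
  have "(\<lambda>t. infsetsum (\<lambda>z. g (t,z)) UNIV) abs_summable_on UNIV"
    using abs_summable_on_Sigma_project1'[of "\<lambda>t z. g (t,z)" UNIV "\<lambda>_. UNIV"] gsum by simp
  then have fs: "f abs_summable_on UNIV" by (simp add: f_def g_def)
  show ?thesis using MI eq fs unfolding pm infsetsum_def by simp
qed



definition MIs :: "'a pmf \<Rightarrow> ('a \<Rightarrow> 't) \<Rightarrow> ('a \<Rightarrow> 'z) \<Rightarrow> 't \<Rightarrow> real" where
  "MIs D A B t = (\<Sum>z\<in>UNIV. pmf (map_pmf (\<lambda>a. (A a, B a)) D) (t,z) *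
      log 2 (pmf (map_pmf (\<lambda>a. (A a, B a)) D) (t,z) / (pmf (map_pmf A D) t * pmf (map_pmf B D) z)))"

lemma cmi_formula:
  fixes D :: "'a pmf" and A :: "'a \<Rightarrow> 't::countable" and B :: "'a \<Rightarrow> 'b::finite"
    and C :: "'a \<Rightarrow> 'c::finite"
  shows "cmi D A B C = infsetsum (MIs D A (\<lambda>a. (B a, C a))) UNIV - infsetsum (MIs D A C) UNIV"
    and "MIs D A (\<lambda>a. (B a, C a)) abs_summable_on UNIV"
    and "MIs D A C abs_summable_on UNIV"
proof -
  have pm: "(count_space UNIV \<Otimes>\<^sub>M count_space UNIV :: ('b \<times> 'c) measure) = count_space UNIV"
    by (simp add: pair_measure_countable)
  have 1: "prob_space.mutual_information (measure_pmf D) 2 (count_space UNIV) (count_space UNIV) A (\<lambda>a. (B a, C a))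
          = infsetsum (MIs D A (\<lambda>a. (B a, C a))) UNIV \<and> MIs D A (\<lambda>a. (B a, C a)) abs_summable_on UNIV"
    using mi_formula[of D A "\<lambda>a. (B a, C a)"] unfolding MIs_def[abs_def] by simp
  have 2: "prob_space.mutual_information (measure_pmf D) 2 (count_space UNIV) (count_space UNIV) A C
          = infsetsum (MIs D A C) UNIV \<and> MIs D A C abs_summable_on UNIV"
    using mi_formula[of D A C] unfolding MIs_def[abs_def] by simp
  show "cmi D A B C = infsetsum (MIs D A (\<lambda>a. (B a, C a))) UNIV - infsetsum (MIs D A C) UNIV"
    unfolding cmi_def prob_space.conditional_mutual_information_def[OF measure_pmf.prob_space_axioms] pm
    using 1 2 by simp
  show "MIs D A (\<lambda>a. (B a, C a)) abs_summable_on UNIV" "MIs D A C abs_summable_on UNIV"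
    using 1 2 by simp_all
qed

lemma cmi_map:
  fixes D :: "'a pmf" and h :: "'a \<Rightarrow> 'e" and A :: "'e \<Rightarrow> 't::countable" and B :: "'e \<Rightarrow> 'b::finite"
    and C :: "'e \<Rightarrow> 'c::finite"
  shows "cmi (map_pmf h D) A B C = cmi D (\<lambda>x. A (h x)) (\<lambda>x. B (h x)) (\<lambda>x. C (h x))"
  unfolding cmi_formula by (simp add: MIs_def map_pmf_comp)

definition chrun :: "('x \<times> 'y \<Rightarrow> 't pmf) \<Rightarrow> ('x \<times> 'y) pmf \<Rightarrow> ('x \<times> 'y \<times> 't) pmf" where
  "chrun K p = bind_pmf p (\<lambda>z. map_pmf (\<lambda>t. (fst z, snd z, t)) (K z))"

lemma pmf_map_chrun:
  fixes K :: "('x::finite \<times> 'y::finite) \<Rightarrow> 't pmf"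
  shows "pmf (map_pmf g (chrun K p)) w = (\<Sum>z\<in>UNIV. pmf p z * pmf (map_pmf (\<lambda>t. g (fst z, snd z, t)) (K z)) w)"
  unfolding chrun_def map_bind_pmf pmf_bind
  by (subst integral_measure_pmf[where A=UNIV]) (auto simp: map_pmf_comp o_def mult.commute)

lemma pmf_map_pair_const:
  "pmf (map_pmf (\<lambda>t. (t, c)) M) (t', c') = (if c' = c then pmf M t' else 0)"
proof -
  have "(\<lambda>t. (t, c)) -` {(t', c')} = (if c' = c then {t'} else {})" by auto
  then show ?thesis by (simp add: pmf_map measure_pmf_single)
qed



definition Kb :: "('x \<times> 'y \<Rightarrow> 't pmf) \<Rightarrow> ('x \<times> 'y) pmf \<Rightarrow> 't \<Rightarrow> real" where
  "Kb K p t = (\<Sum>z\<in>UNIV. pmf p z * pmf (K z) t)"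
definition Qy :: "('x \<times> 'y \<Rightarrow> 't pmf) \<Rightarrow> ('x \<times> 'y) pmf \<Rightarrow> 't \<Rightarrow> 'y \<Rightarrow> real" where
  "Qy K p t y = (\<Sum>z\<in>UNIV. if snd z = y then pmf p z * pmf (K z) t else 0)"
definition py :: "('x \<times> 'y) pmf \<Rightarrow> 'y \<Rightarrow> real" where
  "py p y = (\<Sum>z\<in>UNIV. if snd z = y then pmf p z else 0)"
definition F1 :: "('x \<times> 'y \<Rightarrow> 't pmf) \<Rightarrow> ('x \<times> 'y) pmf \<Rightarrow> 't \<Rightarrow> real" where
  "F1 K p t = (\<Sum>w\<in>UNIV. (pmf p w * pmf (K w) t) * log 2 ((pmf p w * pmf (K w) t) / (Kb K p t * pmf p w)))"
definition F2 :: "('x \<times> 'y \<Rightarrow> 't pmf) \<Rightarrow> ('x \<times> 'y) pmf \<Rightarrow> 't \<Rightarrow> real" where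
  "F2 K p t = (\<Sum>y\<in>UNIV. Qy K p t y * log 2 (Qy K p t y / (Kb K p t * py p y)))"

lemma MIs1:
  fixes K :: "('x::finite \<times> 'y::finite) \<Rightarrow> 't pmf"
  shows "MIs (chrun K p) (\<lambda>(x, y, t). t) (\<lambda>a. ((\<lambda>(x, y, t). x) a, (\<lambda>(x, y, t). y) a)) = F1 K p"
proof
  fix t
  have a: "pmf (map_pmf (\<lambda>a. ((\<lambda>(x, y, t). t) a, ((\<lambda>(x, y, t). x) a, (\<lambda>(x, y, t). y) a))) (chrun K p)) (t, w)
        = pmf p w * pmf (K w) t" for w
    unfolding pmf_map_chrun by (simp add: pmf_map_pair_const if_distrib cong: if_cong)
  have b: "pmf (map_pmf (\<lambda>(x, y, t). t) (chrun K p)) t = Kb K p t"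
    unfolding pmf_map_chrun Kb_def by (simp add: split_beta)
  have c: "pmf (map_pmf (\<lambda>a. ((\<lambda>(x, y, t). x) a, (\<lambda>(x, y, t). y) a)) (chrun K p)) w = pmf p w" for w
    unfolding pmf_map_chrun by (simp add: split_beta map_pmf_const)
  show "MIs (chrun K p) (\<lambda>(x, y, t). t) (\<lambda>a. ((\<lambda>(x, y, t). x) a, (\<lambda>(x, y, t). y) a)) t = F1 K p t"
    unfolding MIs_def F1_def using a b c by simp
qed

lemma MIs2:
  fixes K :: "('x::finite \<times> 'y::finite) \<Rightarrow> 't pmf"
  shows "MIs (chrun K p) (\<lambda>(x, y, t). t) (\<lambda>(x, y, t). y) = F2 K p"
proof
  fix t
  have a: "pmf (map_pmf (\<lambda>a. ((\<lambda>(x, y, t). t) a, (\<lambda>(x, y, t). y) a)) (chrun K p)) (t, y)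
        = Qy K p t y" for y
    unfolding pmf_map_chrun Qy_def by (auto simp: pmf_map_pair_const split_beta intro!: sum.cong)
  have b: "pmf (map_pmf (\<lambda>(x, y, t). t) (chrun K p)) t = Kb K p t"
    unfolding pmf_map_chrun Kb_def by (simp add: split_beta)
  have c: "pmf (map_pmf (\<lambda>(x, y, t). y) (chrun K p)) y = py p y" for y
    unfolding pmf_map_chrun py_def by (intro sum.cong) (auto simp: split_beta map_pmf_const pmf_return)
  show "MIs (chrun K p) (\<lambda>(x, y, t). t) (\<lambda>(x, y, t). y) t = F2 K p t"
    unfolding MIs_def F2_def using a b c by simp
qed

lemma cmi_chrun:
  fixes K :: "('x::finite \<times> 'y::finite) \<Rightarrow> 't::countable pmf"
  shows "cmi (chrun K p) (\<lambda>(x, y, t). t) (\<lambda>(x, y, t). x) (\<lambda>(x, y, t). y)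
          = infsetsum (F1 K p) UNIV - infsetsum (F2 K p) UNIV"
    and "F1 K p abs_summable_on UNIV" "F2 K p abs_summable_on UNIV"
  using cmi_formula(1,2)[where D="chrun K p" and A="\<lambda>(x, y, t). t" and B="\<lambda>(x, y, t). x" and C="\<lambda>(x, y, t). y"]
    cmi_formula(3)[where D="chrun K p" and A="\<lambda>(x, y, t). t" and C="\<lambda>(x, y, t). y"]
  unfolding MIs1 MIs2 by auto



lemma regroup:
  fixes a :: "('x::finite \<times> 'y::finite) \<Rightarrow> real"
  shows "(\<Sum>y\<in>UNIV. (\<Sum>z\<in>UNIV. if snd z = y then a z else 0) * G y) = (\<Sum>z\<in>UNIV. a z * G (snd z))"
proof -
  have "(\<Sum>y\<in>UNIV. (\<Sum>z\<in>UNIV. if snd z = y then a z else 0) * G y)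
      = (\<Sum>y\<in>UNIV. \<Sum>z\<in>UNIV. if snd z = y then a z * G y else 0)"
    by (auto simp: sum_distrib_right intro!: sum.cong)
  also have "\<dots> = (\<Sum>z\<in>UNIV. \<Sum>y\<in>UNIV. if snd z = y then a z * G y else 0)"
    by (rule sum.swap)
  also have "\<dots> = (\<Sum>z\<in>UNIV. a z * G (snd z))"
    by simp
  finally show ?thesis .
qed

lemma log_alg1:
  fixes a b c d e :: real
  assumes "0 < a" "0 < b" "0 < c" "0 < d" "0 < e"
  shows "log 2 (a*b/(c*a)) - log 2 (d/(c*e)) = log 2 (b*e/d)"
  using assms by (simp add: log_mult log_divide)

context
  fixes K :: "('x::finite \<times> 'y::finite) \<Rightarrow> 't::countable pmf"
begin

definition Lg :: "('x \<times> 'y) pmf \<Rightarrow> ('x \<times> 'y) \<Rightarrow> 't \<Rightarrow> real" where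
  "Lg p z t = log 2 (pmf (K z) t * py p (snd z) / Qy K p t (snd z))"
definition Hg :: "('x \<times> 'y) pmf \<Rightarrow> ('x \<times> 'y) pmf \<Rightarrow> 't \<Rightarrow> real" where
  "Hg p q t = (\<Sum>z\<in>UNIV. pmf q z * (pmf (K z) t * Lg p z t))"
definition Sg :: "('x \<times> 'y) pmf \<Rightarrow> ('x \<times> 'y) \<Rightarrow> real" where
  "Sg p z = infsetsum (\<lambda>t. pmf (K z) t * Lg p z t) UNIV"

lemma Qy_nonneg: "0 \<le> Qy K p t y"
  unfolding Qy_def by (intro sum_nonneg) auto
lemma py_nonneg: "0 \<le> py (p :: ('x \<times> 'y) pmf) y"
  unfolding py_def by (intro sum_nonneg) auto
lemma Kb_nonneg: "0 \<le> Kb K p t"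
  unfolding Kb_def by (intro sum_nonneg) auto

lemma Qy_ge: "pmf p z * pmf (K z) t \<le> Qy K p t (snd z)"
proof -
  have "pmf p z * pmf (K z) t = (if snd z = snd z then pmf p z * pmf (K z) t else 0)" by simp
  also have "\<dots> \<le> Qy K p t (snd z)" unfolding Qy_def
    by (rule member_le_sum[where f="\<lambda>z'. if snd z' = snd z then pmf p z' * pmf (K z') t else 0"]) auto
  finally show ?thesis .
qed

lemma py_ge: "pmf p z \<le> py p (snd (z :: 'x \<times> 'y))"
proof -
  have "pmf p z = (if snd z = snd z then pmf p z else 0)" by simp
  also have "\<dots> \<le> py p (snd z)" unfolding py_def
    by (rule member_le_sum[where f="\<lambda>z'. if snd z' = snd z then pmf p z' else 0"]) auto
  finally show ?thesis .
qed

lemma Kb_ge: "pmf p z * pmf (K z) t \<le> Kb K p t"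
  unfolding Kb_def by (rule member_le_sum) auto

lemma F12_Hg: "F1 K p t - F2 K p t = Hg p p t"
proof -
  have F2: "F2 K p t = (\<Sum>z\<in>UNIV. (pmf p z * pmf (K z) t) * log 2 (Qy K p t (snd z) / (Kb K p t * py p (snd z))))"
    unfolding F2_def
    using regroup[of "\<lambda>z. pmf p z * pmf (K z) t" "\<lambda>y. log 2 (Qy K p t y / (Kb K p t * py p y))"]
    unfolding Qy_def by simp
  have "F1 K p t - F2 K p t = (\<Sum>z\<in>UNIV. (pmf p z * pmf (K z) t) *
       (log 2 ((pmf p z * pmf (K z) t) / (Kb K p t * pmf p z)) - log 2 (Qy K p t (snd z) / (Kb K p t * py p (snd z)))))"
    unfolding F1_def F2 by (simp add: sum_subtractf right_diff_distrib)
  also have "\<dots> = Hg p p t" unfolding Hg_def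
  proof (rule sum.cong)
    fix z :: "'x \<times> 'y"
    show "(pmf p z * pmf (K z) t) *
       (log 2 ((pmf p z * pmf (K z) t) / (Kb K p t * pmf p z)) - log 2 (Qy K p t (snd z) / (Kb K p t * py p (snd z))))
       = pmf p z * (pmf (K z) t * Lg p z t)"
    proof (cases "pmf p z * pmf (K z) t = 0")
      case True then show ?thesis by auto
    next
      case False
      then have p: "0 < pmf p z" and k: "0 < pmf (K z) t"
        using pmf_nonneg[of p z] pmf_nonneg[of "K z" t] by (auto simp: less_le)
      have pk: "0 < pmf p z * pmf (K z) t" using p k by simp
      have kb: "0 < Kb K p t" using Kb_ge[of p z t] pk by linarith
      have q: "0 < Qy K p t (snd z)" using Qy_ge[of p z t] pk by linarith
      have y: "0 < py p (snd z)" using py_ge[of p z] p by linarith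
      have "log 2 ((pmf p z * pmf (K z) t) / (Kb K p t * pmf p z)) - log 2 (Qy K p t (snd z) / (Kb K p t * py p (snd z)))
           = log 2 (pmf (K z) t * py p (snd z) / Qy K p t (snd z))"
        using log_alg1[OF p k kb q y] by (simp add: mult.commute)
      then show ?thesis unfolding Lg_def by simp
    qed
  qed simp
  finally show ?thesis .
qed

lemma Qy_summable: "(\<lambda>t. Qy K p t y) abs_summable_on UNIV"
  unfolding Qy_def
proof (rule abs_summable_sum)
  fix z :: "'x \<times> 'y"
  show "(\<lambda>t. if snd z = y then pmf p z * pmf (K z) t else 0) abs_summable_on UNIV"
    by (cases "snd z = y") (auto intro: abs_summable_on_cmult_right)
qed

lemma Qy_sum: "infsetsum (\<lambda>t. Qy K p t y) UNIV = py p y"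
proof -
  have s: "(\<lambda>t. if snd z = y then pmf p z * pmf (K z) t else 0) abs_summable_on UNIV" for z
    by (cases "snd z = y") (auto intro: abs_summable_on_cmult_right)
  have "infsetsum (\<lambda>t. Qy K p t y) UNIV
      = (\<Sum>z\<in>UNIV. infsetsum (\<lambda>t. if snd z = y then pmf p z * pmf (K z) t else 0) UNIV)"
    unfolding Qy_def by (rule sum_infsetsum[symmetric]) (use s in auto)
  also have "\<dots> = py p y" unfolding py_def
  proof (rule sum.cong)
    fix z :: "'x \<times> 'y"
    show "infsetsum (\<lambda>t. if snd z = y then pmf p z * pmf (K z) t else 0) UNIV = (if snd z = y then pmf p z else 0)"
    proof (cases "snd z = y")
      case True
      have "infsetsum (\<lambda>t. if snd z = y then pmf p z * pmf (K z) t else 0) UNIV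
           = infsetsum (\<lambda>t. pmf p z * pmf (K z) t) UNIV" using True by simp
      also have "\<dots> = pmf p z * infsetsum (pmf (K z)) UNIV"
        by (rule infsetsum_cmult_right) auto
      finally show ?thesis using True by (simp add: infsetsum_pmf_eq_1)
    qed simp
  qed simp
  finally show ?thesis .
qed

lemma KLg_bound:
  assumes pz: "0 < pmf p z"
  shows "norm (pmf (K z) t * Lg p z t) \<le> pmf (K z) t * log 2 (py p (snd z) / pmf p z)
           + Qy K p t (snd z) / (py p (snd z) * ln 2)"
proof -
  let ?k = "pmf (K z) t" and ?y = "py p (snd z)" and ?q = "Qy K p t (snd z)" and ?c = "py p (snd z) / pmf p z"
  have y: "0 < ?y" using py_ge[of p z] pz by linarith
  have c1: "1 \<le> ?c" using py_ge[of p z] pz by simp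
  have "?c * ?q \<ge> ?c * (pmf p z * ?k)" using Qy_ge[of p z t] c1 by (intro mult_left_mono) auto
  also have "?c * (pmf p z * ?k) = ?k * ?y" using pz by (simp add: field_simps)
  finally have le: "?k * ?y \<le> ?c * ?q" .
  have n: "0 \<le> ?k * ?y" "0 \<le> ?q" using y Qy_nonneg[of p t "snd z"] by auto
  have xb: "\<bar>(?k * ?y) * log 2 ((?k * ?y) / ?q)\<bar> \<le> (?k * ?y) * log 2 ?c + ?q / ln 2"
    by (rule xlog_bound[OF n le c1])
  have "norm (?k * Lg p z t) = \<bar>(?k * ?y) * log 2 ((?k * ?y) / ?q)\<bar> / ?y"
    unfolding Lg_def using y by (simp add: abs_mult)
  also have "\<dots> \<le> ((?k * ?y) * log 2 ?c + ?q / ln 2) / ?y"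
    using xb y by (intro divide_right_mono) auto
  also have "\<dots> = ?k * log 2 ?c + ?q / (?y * ln 2)"
    using y by (simp add: field_simps)
  finally show ?thesis .
qed

lemma KLg_summable:
  assumes pz: "0 < pmf p z"
  shows "(\<lambda>t. pmf (K z) t * Lg p z t) abs_summable_on UNIV"
proof (rule abs_summable_on_comparison_test'[OF _ KLg_bound[OF pz]])
  show "(\<lambda>t. pmf (K z) t * log 2 (py p (snd z) / pmf p z) + Qy K p t (snd z) / (py p (snd z) * ln 2))
        abs_summable_on UNIV"
    unfolding divide_inverse
    by (intro abs_summable_on_add abs_summable_on_cmult_left Qy_summable) auto
qed

lemma qKLg_summable:
  assumes "pmf q z \<noteq> 0 \<Longrightarrow> 0 < pmf p z"
  shows "(\<lambda>t. pmf q z * (pmf (K z) t * Lg p z t)) abs_summable_on UNIV"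
proof (cases "pmf q z = 0")
  case True then show ?thesis by simp
next
  case False then show ?thesis using KLg_summable[of p z] assms
    by (intro abs_summable_on_cmult_right) auto
qed

lemma Sg_nonneg:
  assumes pz: "0 < pmf p z"
  shows "0 \<le> Sg p z"
proof -
  let ?y = "py p (snd z)"
  have y: "0 < ?y" using py_ge[of p z] pz by linarith
  have pt: "- (pmf (K z) t * Lg p z t) \<le> (Qy K p t (snd z) / ?y - pmf (K z) t) / ln 2" for t
  proof -
    have eq: "- (pmf (K z) t * Lg p z t) = pmf (K z) t * log 2 ((Qy K p t (snd z) / ?y) / pmf (K z) t)"
    proof (cases "pmf (K z) t = 0")
      case True then show ?thesis by simp
    next
      case False
      then have k: "0 < pmf (K z) t" using pmf_nonneg[of "K z" t] by linarith
      have q: "0 < Qy K p t (snd z)" using Qy_ge[of p z t] k pz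
        by (smt (verit) mult_pos_pos)
      show ?thesis unfolding Lg_def using k q y by (simp add: log_divide log_mult algebra_simps)
    qed
    have "pmf (K z) t * log 2 ((Qy K p t (snd z) / ?y) / pmf (K z) t) \<le> (Qy K p t (snd z) / ?y - pmf (K z) t) / ln 2"
    proof (rule gibbs_pt)
      show "0 \<le> Qy K p t (snd z) / ?y" using y Qy_nonneg[of p t "snd z"] by simp
      assume k: "0 < pmf (K z) t"
      have q: "0 < Qy K p t (snd z)" using Qy_ge[of p z t] k pz
        by (smt (verit) mult_pos_pos)
      then show "0 < Qy K p t (snd z) / ?y" using y by simp
    qed simp
    then show ?thesis using eq by simp
  qed
  have s1: "(\<lambda>t. (Qy K p t (snd z) / ?y - pmf (K z) t) / ln 2) abs_summable_on UNIV"
    unfolding divide_inverse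
    by (intro abs_summable_on_diff abs_summable_on_cmult_left Qy_summable) auto
  have "infsetsum (\<lambda>t. - (pmf (K z) t * Lg p z t)) UNIV \<le> infsetsum (\<lambda>t. (Qy K p t (snd z) / ?y - pmf (K z) t) / ln 2) UNIV"
    by (rule infsetsum_mono[OF _ s1 pt]) (use KLg_summable[OF pz] in auto)
  also have "\<dots> = (infsetsum (\<lambda>t. Qy K p t (snd z)) UNIV / ?y - infsetsum (pmf (K z)) UNIV) / ln 2"
  proof -
    have a1: "(\<lambda>t. Qy K p t (snd z) / ?y) abs_summable_on UNIV"
      unfolding divide_inverse by (intro abs_summable_on_cmult_left Qy_summable)
    have a2: "(\<lambda>t. Qy K p t (snd z) / ?y - pmf (K z) t) abs_summable_on UNIV"
      using a1 by (intro abs_summable_on_diff) auto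
    have "infsetsum (\<lambda>t. (Qy K p t (snd z) / ?y - pmf (K z) t) / ln 2) UNIV
        = infsetsum (\<lambda>t. Qy K p t (snd z) / ?y - pmf (K z) t) UNIV / ln 2"
      unfolding divide_inverse[of _ "ln 2"] by (rule infsetsum_cmult_left) (use a2 in simp)
    also have "infsetsum (\<lambda>t. Qy K p t (snd z) / ?y - pmf (K z) t) UNIV
        = infsetsum (\<lambda>t. Qy K p t (snd z) / ?y) UNIV - infsetsum (pmf (K z)) UNIV"
      by (rule infsetsum_diff) (use a1 in auto)
    also have "infsetsum (\<lambda>t. Qy K p t (snd z) / ?y) UNIV = infsetsum (\<lambda>t. Qy K p t (snd z)) UNIV / ?y"
      unfolding divide_inverse by (rule infsetsum_cmult_left) (use Qy_summable in simp)
    finally show ?thesis .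
  qed
  also have "\<dots> = 0" using y by (simp add: Qy_sum infsetsum_pmf_eq_1)
  finally show ?thesis unfolding Sg_def by (simp add: infsetsum_uminus)
qed

lemma Hg_sum:
  assumes pos: "\<And>z. pmf q z \<noteq> 0 \<Longrightarrow> 0 < pmf p z"
  shows "Hg p q abs_summable_on UNIV" and "infsetsum (Hg p q) UNIV = (\<Sum>z\<in>UNIV. pmf q z * Sg p z)"
proof -
  have s: "(\<lambda>t. pmf q z * (pmf (K z) t * Lg p z t)) abs_summable_on UNIV" for z
    by (rule qKLg_summable) (use pos in auto)
  show "Hg p q abs_summable_on UNIV" unfolding Hg_def
    by (rule abs_summable_sum) (use s in auto)
  have "infsetsum (Hg p q) UNIV = (\<Sum>z\<in>UNIV. infsetsum (\<lambda>t. pmf q z * (pmf (K z) t * Lg p z t)) UNIV)"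
    unfolding Hg_def by (rule sum_infsetsum[symmetric]) (use s in auto)
  also have "\<dots> = (\<Sum>z\<in>UNIV. pmf q z * Sg p z)" unfolding Sg_def
  proof (rule sum.cong)
    fix z :: "'x \<times> 'y"
    show "infsetsum (\<lambda>t. pmf q z * (pmf (K z) t * Lg p z t)) UNIV = pmf q z * infsetsum (\<lambda>t. pmf (K z) t * Lg p z t) UNIV"
      by (rule infsetsum_cmult_right) (use pos KLg_summable in auto)
  qed simp
  finally show "infsetsum (Hg p q) UNIV = (\<Sum>z\<in>UNIV. pmf q z * Sg p z)" .
qed

definition U :: "('x \<times> 'y) pmf \<Rightarrow> ('x \<times> 'y) pmf \<Rightarrow> 't \<Rightarrow> real" where
  "U \<mu> \<nu> t = (\<Sum>y\<in>UNIV. (py \<nu> y / py \<mu> y * Qy K \<mu> t y - Qy K \<nu> t y) / ln 2)"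

lemma Qy_pos_obtain:
  assumes "0 < Qy K p t y"
  obtains z where "snd z = y" "0 < pmf p z * pmf (K z) t"
proof -
  have "\<exists>z. snd z = y \<and> 0 < pmf p z * pmf (K z) t"
  proof (rule ccontr)
    assume nex: "\<not> ?thesis"
    have "(if snd z = y then pmf p z * pmf (K z) t else 0) = 0" for z
    proof (cases "snd z = y")
      case True
      have "0 \<le> pmf p z * pmf (K z) t" by simp
      moreover have "\<not> 0 < pmf p z * pmf (K z) t" using True nex by blast
      ultimately have "pmf p z * pmf (K z) t = 0" by linarith
      then show ?thesis using True by simp
    qed simp
    then have "Qy K p t y = 0" unfolding Qy_def by (intro sum.neutral) blast
    then show False using assms by simp
  qed
  then show ?thesis using that by blast
qed

lemma diff_bound:
  assumes le: "\<And>z. pmf \<nu> z \<le> 2 * pmf \<mu> z"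
  shows "Hg \<nu> \<nu> t - Hg \<mu> \<nu> t \<le> U \<mu> \<nu> t"
proof -
  define R where "R y = log 2 ((py \<nu> y / py \<mu> y * Qy K \<mu> t y) / Qy K \<nu> t y)" for y
  have "Hg \<nu> \<nu> t - Hg \<mu> \<nu> t = (\<Sum>z\<in>UNIV. (pmf \<nu> z * pmf (K z) t) * R (snd z))"
    unfolding Hg_def sum_subtractf[symmetric]
  proof (rule sum.cong)
    fix z :: "'x \<times> 'y"
    show "pmf \<nu> z * (pmf (K z) t * Lg \<nu> z t) - pmf \<nu> z * (pmf (K z) t * Lg \<mu> z t) =
          (pmf \<nu> z * pmf (K z) t) * R (snd z)"
    proof (cases "pmf \<nu> z * pmf (K z) t = 0")
      case True then show ?thesis by auto
    next
      case False
      then have v: "0 < pmf \<nu> z" and k: "0 < pmf (K z) t"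
        using pmf_nonneg[of \<nu> z] pmf_nonneg[of "K z" t] by (auto simp: less_le)
      have m: "0 < pmf \<mu> z" using le[of z] v by linarith
      have qv: "0 < Qy K \<nu> t (snd z)" using Qy_ge[of \<nu> z t] v k by (smt (verit) mult_pos_pos)
      have qm: "0 < Qy K \<mu> t (snd z)" using Qy_ge[of \<mu> z t] m k by (smt (verit) mult_pos_pos)
      have yv: "0 < py \<nu> (snd z)" using py_ge[of \<nu> z] v by linarith
      have ym: "0 < py \<mu> (snd z)" using py_ge[of \<mu> z] m by linarith
      show ?thesis unfolding Lg_def R_def
        using v k qv qm yv ym by (simp add: log_mult log_divide algebra_simps)
    qed
  qed simp
  also have "\<dots> = (\<Sum>y\<in>UNIV. Qy K \<nu> t y * R y)"
    unfolding Qy_def by (rule regroup[symmetric])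
  also have "\<dots> \<le> U \<mu> \<nu> t" unfolding U_def R_def
  proof (rule sum_mono)
    fix y :: 'y
    show "Qy K \<nu> t y * log 2 ((py \<nu> y / py \<mu> y * Qy K \<mu> t y) / Qy K \<nu> t y)
          \<le> (py \<nu> y / py \<mu> y * Qy K \<mu> t y - Qy K \<nu> t y) / ln 2"
    proof (rule gibbs_pt)
      show "0 \<le> Qy K \<nu> t y" by (rule Qy_nonneg)
      show "0 \<le> py \<nu> y / py \<mu> y * Qy K \<mu> t y"
        using py_nonneg[of \<nu> y] py_nonneg[of \<mu> y] Qy_nonneg[of \<mu> t y] by simp
      assume "0 < Qy K \<nu> t y"
      then obtain z where z: "snd z = y" "0 < pmf \<nu> z * pmf (K z) t" by (rule Qy_pos_obtain)
      then have v: "0 < pmf \<nu> z" and k: "0 < pmf (K z) t"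
        using pmf_nonneg[of \<nu> z] pmf_nonneg[of "K z" t] by (auto simp: zero_less_mult_iff)
      have m: "0 < pmf \<mu> z" using le[of z] v by linarith
      have qm: "0 < Qy K \<mu> t (snd z)" using Qy_ge[of \<mu> z t] m k by (smt (verit) mult_pos_pos)
      have yv: "0 < py \<nu> (snd z)" using py_ge[of \<nu> z] v by linarith
      have ym: "0 < py \<mu> (snd z)" using py_ge[of \<mu> z] m by linarith
      show "0 < py \<nu> y / py \<mu> y * Qy K \<mu> t y" using qm yv ym z(1) by simp
    qed
  qed
  finally show ?thesis .
qed

lemma py_le2:
  assumes le: "\<And>z. pmf \<nu> z \<le> 2 * pmf \<mu> z"
  shows "py \<nu> y \<le> 2 * py (\<mu> :: ('x \<times> 'y) pmf) y"
  unfolding py_def sum_distrib_left by (rule sum_mono) (use le in auto)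

lemma U_sum:
  assumes le: "\<And>z. pmf \<nu> z \<le> 2 * pmf \<mu> z"
  shows "U \<mu> \<nu> abs_summable_on UNIV" and "infsetsum (U \<mu> \<nu>) UNIV = 0"
proof -
  have s: "(\<lambda>t. (py \<nu> y / py \<mu> y * Qy K \<mu> t y - Qy K \<nu> t y) / ln 2) abs_summable_on UNIV" for y
    unfolding divide_inverse[of _ "ln 2"]
    by (intro abs_summable_on_cmult_left abs_summable_on_diff abs_summable_on_cmult_right Qy_summable)
  show "U \<mu> \<nu> abs_summable_on UNIV" unfolding U_def
    by (rule abs_summable_sum) (use s in auto)
  have "infsetsum (U \<mu> \<nu>) UNIV = (\<Sum>y\<in>UNIV. infsetsum (\<lambda>t. (py \<nu> y / py \<mu> y * Qy K \<mu> t y - Qy K \<nu> t y) / ln 2) UNIV)"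
    unfolding U_def by (rule sum_infsetsum[symmetric]) (use s in auto)
  also have "\<dots> = (\<Sum>y::'y\<in>UNIV. 0)"
  proof (rule sum.cong)
    fix y :: 'y
    have a1: "(\<lambda>t. py \<nu> y / py \<mu> y * Qy K \<mu> t y) abs_summable_on UNIV"
      by (intro abs_summable_on_cmult_right Qy_summable)
    have "infsetsum (\<lambda>t. (py \<nu> y / py \<mu> y * Qy K \<mu> t y - Qy K \<nu> t y) / ln 2) UNIV
        = infsetsum (\<lambda>t. py \<nu> y / py \<mu> y * Qy K \<mu> t y - Qy K \<nu> t y) UNIV / ln 2"
      unfolding divide_inverse[of _ "ln 2"] by (rule infsetsum_cmult_left) (use a1 Qy_summable in auto)
    also have "infsetsum (\<lambda>t. py \<nu> y / py \<mu> y * Qy K \<mu> t y - Qy K \<nu> t y) UNIV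
        = infsetsum (\<lambda>t. py \<nu> y / py \<mu> y * Qy K \<mu> t y) UNIV - infsetsum (\<lambda>t. Qy K \<nu> t y) UNIV"
      by (rule infsetsum_diff) (use a1 Qy_summable in auto)
    also have "infsetsum (\<lambda>t. py \<nu> y / py \<mu> y * Qy K \<mu> t y) UNIV = py \<nu> y / py \<mu> y * py \<mu> y"
      by (subst infsetsum_cmult_right) (auto simp: Qy_sum Qy_summable)
    also have "py \<nu> y / py \<mu> y * py \<mu> y = py \<nu> y"
    proof (cases "py \<mu> y = 0")
      case True
      then show ?thesis using py_le2[OF le, of y] py_nonneg[of \<nu> y] by simp
    qed simp
    finally show "infsetsum (\<lambda>t. (py \<nu> y / py \<mu> y * Qy K \<mu> t y - Qy K \<nu> t y) / ln 2) UNIV = 0"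
      by (simp add: Qy_sum)
  qed simp
  finally show "infsetsum (U \<mu> \<nu>) UNIV = 0" by simp
qed

lemma main_ineq:
  assumes le: "\<And>z. pmf \<nu> z \<le> 2 * pmf \<mu> z"
  shows "infsetsum (F1 K \<nu>) UNIV - infsetsum (F2 K \<nu>) UNIV
         \<le> 2 * (infsetsum (F1 K \<mu>) UNIV - infsetsum (F2 K \<mu>) UNIV)"
proof -
  have pos: "pmf \<nu> z \<noteq> 0 \<Longrightarrow> 0 < pmf \<mu> z" for z
    using le[of z] pmf_nonneg[of \<nu> z] by linarith
  have posm: "pmf \<mu> z \<noteq> 0 \<Longrightarrow> 0 < pmf \<mu> z" for z
    using pmf_nonneg[of \<mu> z] by linarith
  have HF: "Hg p p = (\<lambda>t. F1 K p t - F2 K p t)" for p using F12_Hg by auto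
  have "infsetsum (F1 K \<nu>) UNIV - infsetsum (F2 K \<nu>) UNIV = infsetsum (Hg \<nu> \<nu>) UNIV"
    unfolding HF by (rule infsetsum_diff[symmetric]) (use cmi_chrun in auto)
  also have "\<dots> \<le> infsetsum (\<lambda>t. Hg \<mu> \<nu> t + U \<mu> \<nu> t) UNIV"
  proof (rule infsetsum_mono)
    show "Hg \<nu> \<nu> abs_summable_on UNIV" by (rule Hg_sum(1)) (use posm in \<open>auto simp: pmf_nonneg less_le\<close>)
    show "(\<lambda>t. Hg \<mu> \<nu> t + U \<mu> \<nu> t) abs_summable_on UNIV"
      using Hg_sum(1)[of \<nu> \<mu>] pos U_sum(1)[OF le] by auto
    show "Hg \<nu> \<nu> t \<le> Hg \<mu> \<nu> t + U \<mu> \<nu> t" for t using diff_bound[OF le, of t] by simp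
  qed
  also have "\<dots> = infsetsum (Hg \<mu> \<nu>) UNIV + infsetsum (U \<mu> \<nu>) UNIV"
    by (rule infsetsum_add) (use Hg_sum(1)[of \<nu> \<mu>] pos U_sum(1)[OF le] in auto)
  also have "\<dots> = (\<Sum>z\<in>UNIV. pmf \<nu> z * Sg \<mu> z)"
    using Hg_sum(2)[of \<nu> \<mu>] pos U_sum(2)[OF le] by auto
  also have "\<dots> \<le> (\<Sum>z\<in>UNIV. 2 * (pmf \<mu> z * Sg \<mu> z))"
  proof (rule sum_mono)
    fix z :: "'x \<times> 'y"
    show "pmf \<nu> z * Sg \<mu> z \<le> 2 * (pmf \<mu> z * Sg \<mu> z)"
    proof (cases "pmf \<mu> z = 0")
      case True
      then have "pmf \<nu> z = 0" using pos[of z] by fastforce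
      then show ?thesis using True by simp
    next
      case False
      then have "0 \<le> Sg \<mu> z" using posm Sg_nonneg by blast
      then have "pmf \<nu> z * Sg \<mu> z \<le> (2 * pmf \<mu> z) * Sg \<mu> z"
        using le[of z] by (rule mult_right_mono[rotated])
      then show ?thesis by simp
    qed
  qed
  also have "\<dots> = 2 * infsetsum (Hg \<mu> \<mu>) UNIV"
    using Hg_sum(2)[of \<mu> \<mu>] posm by (simp add: sum_distrib_left)
  also have "infsetsum (Hg \<mu> \<mu>) UNIV = infsetsum (F1 K \<mu>) UNIV - infsetsum (F2 K \<mu>) UNIV"
    unfolding HF by (rule infsetsum_diff) (use cmi_chrun in auto)
  finally show ?thesis .
qed

end



definition Kch :: "('x, 'y, 'o) protocol \<Rightarrow> 'x \<times> 'y \<Rightarrow> (nat \<times> bool list) pmf" where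
  "Kch P z = bind_pmf (pub P) (\<lambda>r. bind_pmf (privA P) (\<lambda>ra. bind_pmf (privB P) (\<lambda>rb.
       return_pmf (r, msgs P (fst z) (snd z) r ra rb (rounds P)))))"

lemma run_chrun: "run P p = chrun (Kch P) p"
  unfolding run_def chrun_def Kch_def by (simp add: map_bind_pmf case_prod_unfold)
lemma chrun_swap:
  "chrun (\<lambda>z. K (prod.swap z)) (map_pmf prod.swap p) = map_pmf (\<lambda>(x,y,t). (y,x,t)) (chrun K p)"
  unfolding chrun_def by (simp add: bind_map_pmf map_bind_pmf map_pmf_comp o_def case_prod_unfold)

lemma mix_le:
  assumes "0 \<le> lam" "lam \<le> 1"
  shows "pmf (mix_pmf lam mu0 mu1) z \<le> 2 * pmf (mix_pmf (1/2) mu0 mu1) z"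
proof -
  have e: "pmf (mix_pmf a mu0 mu1) z = a * pmf mu0 z + (1 - a) * pmf mu1 z" if "0 \<le> a" "a \<le> 1" for a
    unfolding mix_pmf_def using that by (simp add: pmf_bind)
  have "lam * pmf mu0 z \<le> pmf mu0 z" using assms by (simp add: mult_left_le_one_le)
  moreover have "(1 - lam) * pmf mu1 z \<le> pmf mu1 z" using assms by (simp add: mult_left_le_one_le)
  ultimately show ?thesis using e[of lam] e[of "1/2"] assms by simp
qed
lemma cmi_swap:
  fixes K :: "('x::finite \<times> 'y::finite) \<Rightarrow> 't::countable pmf"
  shows "cmi (chrun K p) (\<lambda>(x, y, t). t) (\<lambda>(x, y, t). y) (\<lambda>(x, y, t). x)
       = cmi (chrun (\<lambda>z. K (prod.swap z)) (map_pmf prod.swap p)) (\<lambda>(x, y, t). t) (\<lambda>(x, y, t). x) (\<lambda>(x, y, t). y)"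
proof -
  have e1: "(\<lambda>a. (\<lambda>(x, y, t). t) ((\<lambda>(x,y,t). (y,x,t)) a)) = (\<lambda>(x, y, t). t)" by (auto simp: fun_eq_iff)
  have e2: "(\<lambda>a. (\<lambda>(x, y, t). x) ((\<lambda>(x,y,t). (y,x,t)) a)) = (\<lambda>(x, y, t). y)" by (auto simp: fun_eq_iff)
  have e3: "(\<lambda>a. (\<lambda>(x, y, t). y) ((\<lambda>(x,y,t). (y,x,t)) a)) = (\<lambda>(x, y, t). x)" by (auto simp: fun_eq_iff)
  show ?thesis unfolding chrun_swap cmi_map e1 e2 e3 ..
qed

lemma pmf_swap: "pmf (map_pmf prod.swap p) z = pmf p (prod.swap z)"
  using pmf_map_inj'[of prod.swap p "prod.swap z"] by simp

lemma cmi1_le: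
  fixes K :: "('x::finite \<times> 'y::finite) \<Rightarrow> 't::countable pmf"
  assumes le: "\<And>z. pmf \<nu> z \<le> 2 * pmf \<mu> z"
  shows "cmi (chrun K \<nu>) (\<lambda>(x, y, t). t) (\<lambda>(x, y, t). x) (\<lambda>(x, y, t). y)
     \<le> 2 * cmi (chrun K \<mu>) (\<lambda>(x, y, t). t) (\<lambda>(x, y, t). x) (\<lambda>(x, y, t). y)"
  unfolding cmi_chrun(1) using main_ineq[of \<nu> \<mu> K] le by simp

lemma info_le:
  fixes P :: "('x::finite, 'y::finite, 'o) protocol"
  assumes le: "\<And>z. pmf \<nu> z \<le> 2 * pmf \<mu> z"
  shows "internal_info P \<nu> \<le> 2 * internal_info P \<mu>"
proof -
  have le': "pmf (map_pmf prod.swap \<nu>) z \<le> 2 * pmf (map_pmf prod.swap \<mu>) z" for z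
    unfolding pmf_swap by (rule le)
  show ?thesis
    unfolding internal_info_def run_chrun cmi_swap
    using cmi1_le[OF le, of "Kch P"] cmi1_le[OF le', of "\<lambda>z. Kch P (prod.swap z)"] by simp
qed

lemma pmf_chrun_le:
  fixes K :: "('x::finite \<times> 'y::finite) \<Rightarrow> 't pmf"
  assumes le: "\<And>z. pmf \<nu> z \<le> 2 * pmf \<mu> z"
  shows "pmf (chrun K \<nu>) a \<le> 2 * pmf (chrun K \<mu>) a"
proof -
  have "pmf (chrun K \<nu>) a = pmf (map_pmf id (chrun K \<nu>)) a" by simp
  also have "\<dots> = (\<Sum>z\<in>UNIV. pmf \<nu> z * pmf (map_pmf (\<lambda>t. (fst z, snd z, t)) (K z)) a)"
    by (subst pmf_map_chrun) simp
  also have "\<dots> \<le> (\<Sum>z\<in>UNIV. 2 * (pmf \<mu> z * pmf (map_pmf (\<lambda>t. (fst z, snd z, t)) (K z)) a))"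
  proof (rule sum_mono)
    fix z :: "'x \<times> 'y"
    have "pmf \<nu> z * pmf (map_pmf (\<lambda>t. (fst z, snd z, t)) (K z)) a \<le> (2 * pmf \<mu> z) * pmf (map_pmf (\<lambda>t. (fst z, snd z, t)) (K z)) a"
      using le[of z] by (rule mult_right_mono) simp
    then show "pmf \<nu> z * pmf (map_pmf (\<lambda>t. (fst z, snd z, t)) (K z)) a \<le> 2 * (pmf \<mu> z * pmf (map_pmf (\<lambda>t. (fst z, snd z, t)) (K z)) a)"
      by simp
  qed
  also have "\<dots> = 2 * pmf (map_pmf id (chrun K \<mu>)) a"
    by (subst pmf_map_chrun) (simp add: sum_distrib_left)
  finally show ?thesis by simp
qed

lemma err_le:
  fixes P :: "('x::finite, 'y::finite, 'o) protocol"
  assumes le: "\<And>z. pmf \<nu> z \<le> 2 * pmf \<mu> z"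
  shows "err P \<nu> f \<le> 2 * err P \<mu> f"
proof -
  let ?E = "{(x, y, t). outp P (fst t) (snd t) \<noteq> f x y}"
  have "err P \<nu> f = infsetsum (pmf (chrun (Kch P) \<nu>)) ?E"
    unfolding err_def run_chrun by (rule measure_pmf_conv_infsetsum)
  also have "\<dots> \<le> infsetsum (\<lambda>a. 2 * pmf (chrun (Kch P) \<mu>) a) ?E"
    by (rule infsetsum_mono) (auto intro: abs_summable_on_cmult_right pmf_chrun_le[OF le])
  also have "\<dots> = 2 * infsetsum (pmf (chrun (Kch P) \<mu>)) ?E"
    by (rule infsetsum_cmult_right) auto
  also have "\<dots> = 2 * err P \<mu> f"
    unfolding err_def run_chrun by (simp add: measure_pmf_conv_infsetsum)
  finally show ?thesis .
qed


theorem fact4p3: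
  fixes f :: "'x::finite \<Rightarrow> 'y::finite \<Rightarrow> 'o"
    and mu0 mu1 :: "('x \<times> 'y) pmf"
    and lam eps :: real
  assumes "0 \<le> lam" and "lam \<le> 1" and "0 \<le> eps"
  shows "IC_internal (mix_pmf lam mu0 mu1) f (2 * eps)
           \<le> 2 * IC_internal (mix_pmf (1/2) mu0 mu1) f eps + 6"
proof -
  let ?nu = "mix_pmf lam mu0 mu1" and ?mu = "mix_pmf (1/2) mu0 mu1"
  have le: "\<And>z. pmf ?nu z \<le> 2 * pmf ?mu z" by (rule mix_le[OF assms(1,2)])
  define S where "S = {ereal (internal_info P ?mu) | P :: ('x, 'y, 'o) protocol. err P ?mu f \<le> eps}"
  have "IC_internal ?nu f (2 * eps) \<le> Inf {ereal 2 * x | x. x \<in> S}"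
  proof (rule Inf_greatest)
    fix w assume "w \<in> {ereal 2 * x | x. x \<in> S}"
    then obtain P :: "('x, 'y, 'o) protocol" where w: "w = ereal 2 * ereal (internal_info P ?mu)"
      and e: "err P ?mu f \<le> eps" unfolding S_def by auto
    have ne: "err P ?nu f \<le> 2 * eps" using err_le[OF le, of P f] e by linarith
    have "IC_internal ?nu f (2 * eps) \<le> ereal (internal_info P ?nu)"
      unfolding IC_internal_def apply (rule Inf_lower) using ne by blast
    also have "\<dots> \<le> w" unfolding w using info_le[OF le, of P] by simp
    finally show "IC_internal ?nu f (2 * eps) \<le> w" .
  qed
  also have "\<dots> = ereal 2 * Inf {x. x \<in> S}" by (rule ereal_Inf_cmult) simp
  also have "\<dots> = 2 * IC_internal ?mu f eps"
  proof -
    have a: "ereal 2 = 2" by simp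
    have b: "{x. x \<in> S} = S" by simp
    have c: "IC_internal ?mu f eps = Inf S" unfolding IC_internal_def S_def ..
    show ?thesis unfolding a b c ..
  qed
  finally have "IC_internal ?nu f (2 * eps) \<le> 2 * IC_internal ?mu f eps" .
  moreover have "2 * IC_internal ?mu f eps \<le> 2 * IC_internal ?mu f eps + 6"
  proof (cases "2 * IC_internal ?mu f eps")
    case (real r) then show ?thesis by simp
  qed simp_all
  ultimately show ?thesis by (rule order_trans)
qed


end
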